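(* Let $\Theta_1,\Theta_2,\ldots$ be independent random variables with $\mathbb P(\Theta_j\le\theta)=\theta/(\theta+j-1)$ for $\theta\ge0$ (convention $0/0=1$). For $n\ge1$, let $C_{n,\theta}$ be the composition of $n$ whose binary representation is $(1(\Theta_j\le\theta))_{1\le j\le n}$, and let $(\Pi_{n,\theta},\theta\ge0)$ be the associated partition-valued process. Then for every $n>2$ the process $(\Pi_{n,\theta},\theta\ge0)$ is not a Markov process.
   Context: A composition of $n$ is a sequence of positive integers $(n_1,\ldots,n_k)$ with sum $n$, viewed as $n$ balls in an ordered sequence of $k$ nonempty boxes, the $i$th box containing $n_i$ balls. Its binary representation is the length-$n$ 0/1 sequence formed by concatenating the words $10^{n_1-1},\ldots,10^{n_k-1}$. Given a process $(C_{n,\theta},\theta\ge0)$ of compositions of $n$, the associated partition-valued process $(\Pi_{n,\theta},\theta\ge0)$ is obtained by labelling the $n$ ball positions (left to right) by $\sigma(1),\ldots,\sigma(n)$ for a uniform random permutation $\sigma$ of $[n]$ independent of the compositions (the same $\sigma$ for all $\theta$), and then forgetting the order of the boxes, yielding a partition of $[n]$ into the sets of labels in each box. *)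

theory Defs
  imports "HOL-Probability.Probability" "HOL-Combinatorics.Permutations"
begin

definition theta_cdf :: "nat \<Rightarrow> real \<Rightarrow> real" where
  "theta_cdf j \<theta> = (if \<theta> + real j - 1 = 0 then 1 else \<theta> / (\<theta> + real j - 1))"

text \<open>Given a binary word b (positions 1..n), two positions lie in the same box of the
  associated composition iff no position strictly after the smaller and up to the larger
  carries a 1 (each box is a word 1 0...0).\<close>
definition same_box :: "(nat \<Rightarrow> bool) \<Rightarrow> nat \<Rightarrow> nat \<Rightarrow> bool" where
  "same_box b i j \<longleftrightarrow> (\<forall>k. min i j < k \<and> k \<le> max i j \<longrightarrow> \<not> b k)"

definition comp_boxes :: "nat \<Rightarrow> (nat \<Rightarrow> bool) \<Rightarrow> nat set set" where
  "comp_boxes n b = (\<lambda>i. {j \<in> {1..n}. same_box b i j}) ` {1..n}"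

definition label_partition :: "(nat \<Rightarrow> nat) \<Rightarrow> nat set set \<Rightarrow> nat set set" where
  "label_partition s P = (\<lambda>B. s ` B) ` P"

definition Pi_proc :: "nat \<Rightarrow> (nat \<Rightarrow> 'a \<Rightarrow> real) \<Rightarrow> ('a \<Rightarrow> nat \<Rightarrow> nat) \<Rightarrow> real \<Rightarrow> 'a \<Rightarrow> nat set set" where
  "Pi_proc n \<Theta> \<sigma> \<theta> \<omega> = label_partition (\<sigma> \<omega>) (comp_boxes n (\<lambda>j. \<Theta> j \<omega> \<le> \<theta>))"

text \<open>Markov property (w.r.t. the natural filtration) of a process with discrete state space,
  in its finite-dimensional form: for times s_0 < ... < s_k < t in T,
  P(X_t = y, X_{s_i} = x_i for all i) P(X_{s_k} = x_k)
    = P(X_t = y, X_{s_k} = x_k) P(X_{s_i} = x_i for all i).\<close>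
definition markov_discrete :: "'a measure \<Rightarrow> real set \<Rightarrow> (real \<Rightarrow> 'a \<Rightarrow> 'b) \<Rightarrow> bool" where
  "markov_discrete M T X \<longleftrightarrow>
     (\<forall>k (s::nat \<Rightarrow> real) (x::nat \<Rightarrow> 'b) t y.
        (\<forall>i\<le>k. s i \<in> T) \<and> t \<in> T \<and> (\<forall>i<k. s i < s (Suc i)) \<and> s k < t \<longrightarrow>
        measure M {\<omega> \<in> space M. X t \<omega> = y \<and> (\<forall>i\<le>k. X (s i) \<omega> = x i)}
          * measure M {\<omega> \<in> space M. X (s k) \<omega> = x k}
        = measure M {\<omega> \<in> space M. X t \<omega> = y \<and> X (s k) \<omega> = x k}
          * measure M {\<omega> \<in> space M. \<forall>i\<le>k. X (s i) \<omega> = x i})"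

end

theory Submission
  imports Defs
begin

lemma same_box_le: "i \<le> j \<Longrightarrow> same_box b i j \<longleftrightarrow> (\<forall>k. i < k \<and> k \<le> j \<longrightarrow> \<not> b k)"
  unfolding same_box_def by (simp add: min_def max_def)

lemma same_box_sym: "same_box b i j = same_box b j i"
  unfolding same_box_def by (simp add: min.commute max.commute)

lemma same_box_ge: "j \<le> i \<Longrightarrow> same_box b i j \<longleftrightarrow> (\<forall>k. j < k \<and> k \<le> i \<longrightarrow> \<not> b k)"
  using same_box_le same_box_sym by metis

lemma comp_boxes_cong:
  assumes "\<And>j. j \<in> {1..n} \<Longrightarrow> b j = b' j"
  shows "comp_boxes n b = comp_boxes n b'"
proof -
  have "same_box b i j = same_box b' i j" if "i \<in> {1..n}" "j \<in> {1..n}" for i j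
  proof (cases "i \<le> j")
    case True
    then show ?thesis using that assms by (simp add: same_box_le)
  next
    case False
    then show ?thesis using that assms by (simp add: same_box_ge)
  qed
  then show ?thesis unfolding comp_boxes_def
    by (intro image_cong refl) auto
qed

lemma cb_mem: "B \<in> comp_boxes n b \<longleftrightarrow> (\<exists>i\<in>{1..n}. B = {j \<in> {1..n}. same_box b i j})"
  unfolding comp_boxes_def by auto

lemma cb1:
  assumes "n \<ge> 2" "b 2" "\<forall>k\<in>{3..n}. \<not> b k"
  shows "comp_boxes n b = {{1},{2..n}}"
proof -
  have b1: "{j \<in> {1..n}. same_box b 1 j} = {1}"
  proof safe
    fix j assume j: "j \<in> {1..n}" "same_box b 1 j"
    show "j = 1"
    proof (rule ccontr)
      assume "j \<noteq> 1"
      then have "2 \<le> j" using j by auto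
      then show False using j assms(2) by (auto simp: same_box_le)
    qed
  qed (use assms in \<open>auto simp: same_box_def\<close>)
  have b2: "{j \<in> {1..n}. same_box b i j} = {2..n}" if "i \<in> {2..n}" for i
  proof safe
    fix j assume j: "j \<in> {1..n}" "same_box b i j"
    have "2 \<le> j"
    proof (rule ccontr)
      assume "\<not> 2 \<le> j"
      then have "j = 1" using j by auto
      then show False using j assms(2) that by (auto simp: same_box_ge)
    qed
    then show "j \<in> {2..n}" using j by auto
  next
    fix j assume j: "j \<in> {2..n}"
    show "same_box b i j"
    proof (cases "i \<le> j")
      case True
      then show ?thesis using assms(3) that j by (auto simp: same_box_le)
    next
      case False
      then show ?thesis using assms(3) that j by (auto simp: same_box_ge)
    qed
  qed auto
  have "{1..n} = insert (1::nat) {2..n}" using assms by auto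
  then have "comp_boxes n b = insert {1} ((\<lambda>i. {j \<in> {1..n}. same_box b i j}) ` {2..n})"
    unfolding comp_boxes_def using b1 by simp
  also have "(\<lambda>i. {j \<in> {1..n}. same_box b i j}) ` {2..n} = {{2..n}}"
    using b2 assms(1) by auto
  finally show ?thesis by simp
qed

lemma cb2:
  assumes "n \<ge> 2" "b n" "\<forall>k\<in>{2..n-1}. \<not> b k"
  shows "comp_boxes n b = {{1..n-1},{n}}"
proof -
  have b1: "{j \<in> {1..n}. same_box b n j} = {n}"
  proof safe
    fix j assume j: "j \<in> {1..n}" "same_box b n j"
    show "j = n"
    proof (rule ccontr)
      assume "j \<noteq> n"
      then have "j < n" using j by auto
      then show False using j assms(2) by (auto simp: same_box_ge)
    qed
  qed (use assms in \<open>auto simp: same_box_def\<close>)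
  have b2: "{j \<in> {1..n}. same_box b i j} = {1..n-1}" if "i \<in> {1..n-1}" for i
  proof safe
    fix j assume j: "j \<in> {1..n}" "same_box b i j"
    have "j \<le> n - 1"
    proof (rule ccontr)
      assume "\<not> j \<le> n - 1"
      then have "j = n" using j by auto
      then show False using j assms(2) that by (auto simp: same_box_le)
    qed
    then show "j \<in> {1..n-1}" using j by auto
  next
    fix j assume j: "j \<in> {1..n-1}"
    show "same_box b i j"
    proof (cases "i \<le> j")
      case True
      then show ?thesis using assms(3) that j by (auto simp: same_box_le)
    next
      case False
      then show ?thesis using assms(3) that j by (auto simp: same_box_ge)
    qed
  qed auto
  have "{1..n} = insert n {1..n-1}" using assms by auto
  then have "comp_boxes n b = insert {n} ((\<lambda>i. {j \<in> {1..n}. same_box b i j}) ` {1..n-1})"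
    unfolding comp_boxes_def using b1 by simp
  also have "(\<lambda>i. {j \<in> {1..n}. same_box b i j}) ` {1..n-1} = (\<lambda>_. {1..n-1}) ` {1..n-1}"
    using b2 by (intro image_cong) auto
  also have "\<dots> = {{1..n-1}}"
    by (rule image_constant[of 1]) (use assms(1) in auto)
  finally show ?thesis by auto
qed

lemma cb_fwd:
  assumes n: "n \<ge> 3" and q: "q \<in> {1..n}" and B1: "{q} \<in> comp_boxes n b"
    and B2: "{1..n} - {q} \<in> comp_boxes n b"
  shows "(q = 1 \<and> b 2 \<and> (\<forall>k\<in>{3..n}. \<not> b k)) \<or> (q = n \<and> b n \<and> (\<forall>k\<in>{2..n-1}. \<not> b k))"
proof -
  obtain i where i: "i \<in> {1..n}" "{q} = {j \<in> {1..n}. same_box b i j}"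
    using B1 unfolding cb_mem by blast
  have "i \<in> {j \<in> {1..n}. same_box b i j}" using i(1) by (auto simp: same_box_le)
  then have "i = q" using i(2) by blast
  then have boxq: "\<And>j. j \<in> {1..n} \<Longrightarrow> same_box b q j \<longleftrightarrow> j = q"
    using i(2) by blast
  obtain i' where i': "i' \<in> {1..n}" "{1..n} - {q} = {j \<in> {1..n}. same_box b i' j}"
    using B2 unfolding cb_mem by blast
  have boxi': "\<And>j. j \<in> {1..n} \<Longrightarrow> same_box b i' j \<longleftrightarrow> j \<noteq> q"
    using i'(2) by blast
  have iq: "i' \<noteq> q" using boxi'[of i'] i'(1) by (auto simp: same_box_def)
  have conv: "\<forall>k. j < k \<and> k \<le> l \<longrightarrow> \<not> b k"
    if "same_box b i' j" "same_box b i' l" "j \<le> l" for j l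
  proof (intro allI impI)
    fix k assume k: "j < k \<and> k \<le> l"
    show "\<not> b k"
    proof (cases "k \<le> i'")
      case True
      then show ?thesis using that(1) k
        by (cases "j \<le> i'") (auto simp: same_box_le same_box_ge)
    next
      case False
      then show ?thesis using that(2) k
        by (cases "l \<le> i'") (auto simp: same_box_le same_box_ge)
    qed
  qed
  consider "q = 1" | "q = n" | "1 < q \<and> q < n" using q by force
  then show ?thesis
  proof cases
    case 1
    have "\<not> same_box b 1 2" using boxq[of 2] n 1 by auto
    then obtain k where "1 < k" "k \<le> (2::nat)" "b k" by (auto simp: same_box_le)
    moreover from this have "k = 2" by linarith
    ultimately have b2: "b 2" by simp
    have "same_box b i' 2" "same_box b i' n" using boxi' n 1 by auto
    then have "\<forall>k. 2 < k \<and> k \<le> n \<longrightarrow> \<not> b k" using conv n by auto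
    then show ?thesis using 1 b2 by auto
  next
    case 2
    have "\<not> same_box b n (n-1)" using boxq[of "n-1"] n 2 by auto
    then obtain k where "n - 1 < k" "k \<le> n" "b k" using n by (auto simp: same_box_ge)
    moreover from this have "k = n" by linarith
    ultimately have b2: "b n" by simp
    have "same_box b i' 1" "same_box b i' (n-1)" using boxi' n 2 by auto
    then have "\<forall>k. 1 < k \<and> k \<le> n - 1 \<longrightarrow> \<not> b k" using conv n by auto
    then show ?thesis using 2 b2 by auto
  next
    case 3
    have "same_box b i' 1" "same_box b i' n" using boxi' n 3 by auto
    then have nb: "\<forall>k. 1 < k \<and> k \<le> n \<longrightarrow> \<not> b k" using conv n by auto
    have "same_box b q 1"
      using nb 3 by (auto simp: same_box_ge)
    then show ?thesis using boxq[of 1] 3 by auto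
  qed
qed

lemma lp_char:
  assumes n: "n \<ge> 3" and p: "p permutes {1..n}"
  shows "label_partition p (comp_boxes n b) = {{1},{2..n}} \<longleftrightarrow>
    (p 1 = 1 \<and> b 2 \<and> (\<forall>k\<in>{3..n}. \<not> b k)) \<or> (p n = 1 \<and> b n \<and> (\<forall>k\<in>{2..n-1}. \<not> b k))"
proof -
  have inj: "inj_on p {1..n}" using p by (rule permutes_inj_on)
  have img: "p ` {1..n} = {1..n}" using p by (rule permutes_image)
  have dif: "p ` ({1..n} - {q}) = {1..n} - {p q}" if "q \<in> {1..n}" for q
    using inj_on_image_set_diff[OF inj, of "{1..n}" "{q}"] that img by auto
  show ?thesis
  proof
    assume L: "label_partition p (comp_boxes n b) = {{1},{2..n}}"
    have "{1} \<in> label_partition p (comp_boxes n b)" using L by simp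
    then obtain B where B: "B \<in> comp_boxes n b" "p ` B = {1}"
      unfolding label_partition_def by auto
    have "{2..n} \<in> label_partition p (comp_boxes n b)" using L by simp
    then obtain B' where B': "B' \<in> comp_boxes n b" "p ` B' = {2..n}"
      unfolding label_partition_def by auto
    have sub: "C \<subseteq> {1..n}" if "C \<in> comp_boxes n b" for C
      using that unfolding cb_mem by auto
    obtain q where q: "q \<in> B" "p q = 1" using B(2) by (metis imageE insertI1)
    have qn: "q \<in> {1..n}" using q sub[OF B(1)] by auto
    have Bq: "B = {q}"
    proof safe
      fix x assume "x \<in> B"
      then have "p x = p q" "x \<in> {1..n}" using B(2) q sub[OF B(1)] by auto
      then show "x = q" using inj qn by (meson inj_onD)
    qed (use q in auto)
    have B'q: "B' = {1..n} - {q}"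
    proof (intro equalityI subsetI)
      fix x assume "x \<in> B'"
      moreover have "x \<noteq> q"
      proof
        assume "x = q"
        then have "p q \<in> {2..n}" using B'(2) \<open>x \<in> B'\<close> by blast
        then show False using q by simp
      qed
      ultimately show "x \<in> {1..n} - {q}" using sub[OF B'(1)] by auto
    next
      fix x assume x: "x \<in> {1..n} - {q}"
      then have "p x \<in> {1..n}" using img by auto
      moreover have "p x \<noteq> 1" using x qn q inj by (metis DiffE inj_onD singletonI)
      ultimately have "p x \<in> p ` B'" using B'(2) by auto
      then obtain y where "y \<in> B'" "p y = p x" by auto
      then show "x \<in> B'" using inj x sub[OF B'(1)] by (metis DiffD1 inj_onD subsetD)
    qed
    have "(q = 1 \<and> b 2 \<and> (\<forall>k\<in>{3..n}. \<not> b k)) \<or> (q = n \<and> b n \<and> (\<forall>k\<in>{2..n-1}. \<not> b k))"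
      using cb_fwd[OF n qn] B(1) B'(1) Bq B'q by auto
    then show "(p 1 = 1 \<and> b 2 \<and> (\<forall>k\<in>{3..n}. \<not> b k)) \<or> (p n = 1 \<and> b n \<and> (\<forall>k\<in>{2..n-1}. \<not> b k))"
      using q by auto
  next
    assume R: "(p 1 = 1 \<and> b 2 \<and> (\<forall>k\<in>{3..n}. \<not> b k)) \<or> (p n = 1 \<and> b n \<and> (\<forall>k\<in>{2..n-1}. \<not> b k))"
    have e1: "{1..n} - {1} = {2..n}" by auto
    have e2: "{1..n} - {n} = {1..n-1}" using n by auto
    from R show "label_partition p (comp_boxes n b) = {{1},{2..n}}"
    proof
      assume a: "p 1 = 1 \<and> b 2 \<and> (\<forall>k\<in>{3..n}. \<not> b k)"
      then have "comp_boxes n b = {{1},{2..n}}" using n cb1 by auto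
      moreover have "p ` {2..n} = {2..n}" using dif[of 1] a n e1 by auto
      ultimately show ?thesis using a unfolding label_partition_def by auto
    next
      assume a: "p n = 1 \<and> b n \<and> (\<forall>k\<in>{2..n-1}. \<not> b k)"
      then have "comp_boxes n b = {{1..n-1},{n}}" using n cb2 by auto
      moreover have "p ` {1..n-1} = {2..n}" using dif[of n] a n e1 e2 by auto
      ultimately show ?thesis using a unfolding label_partition_def by auto
    qed
  qed
qed

lemma meas_finite_dep:
  fixes \<sigma> :: "'a \<Rightarrow> nat \<Rightarrow> nat" and \<Theta> :: "nat \<Rightarrow> 'a \<Rightarrow> real"
    and \<Phi> :: "(nat \<Rightarrow> nat) \<Rightarrow> (real \<Rightarrow> nat \<Rightarrow> bool) \<Rightarrow> bool"
  assumes \<sigma>: "\<sigma> \<in> measurable M (count_space UNIV)"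
    and \<Theta>: "\<And>j. j \<in> J \<Longrightarrow> \<Theta> j \<in> borel_measurable M"
    and fin: "finite Ts" "finite J"
    and loc: "\<And>p b b'. (\<And>\<theta> j. \<theta> \<in> Ts \<Longrightarrow> j \<in> J \<Longrightarrow> b \<theta> j = b' \<theta> j) \<Longrightarrow> \<Phi> p b = \<Phi> p b'"
  shows "{\<omega> \<in> space M. \<Phi> (\<sigma> \<omega>) (\<lambda>\<theta> j. \<Theta> j \<omega> \<le> \<theta>)} \<in> sets M"
proof -
  define C where "C = {c :: real \<Rightarrow> nat \<Rightarrow> bool. \<forall>\<theta> j. c \<theta> j \<longrightarrow> \<theta> \<in> Ts \<and> j \<in> J}"
  have finC: "finite C"
  proof -
    have "inj_on (\<lambda>c. {(\<theta>,j). c \<theta> j}) C"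
    proof (rule inj_onI)
      fix c c' assume "{(\<theta>,j). c \<theta> j} = {(\<theta>,j). c' \<theta> j}"
      then have "\<And>\<theta> j. c \<theta> j = c' \<theta> j" by (metis (no_types, lifting) case_prod_conv mem_Collect_eq)
      then show "c = c'" by (intro ext)
    qed
    moreover have "(\<lambda>c. {(\<theta>,j). c \<theta> j}) ` C \<subseteq> Pow (Ts \<times> J)" unfolding C_def by auto
    ultimately show ?thesis using fin
      by (meson finite_Pow_iff finite_SigmaI finite_imageD finite_subset)
  qed
  have eq: "{\<omega> \<in> space M. \<Phi> (\<sigma> \<omega>) (\<lambda>\<theta> j. \<Theta> j \<omega> \<le> \<theta>)} =
     (\<Union>c\<in>C. {\<omega>\<in>space M. \<Phi> (\<sigma> \<omega>) c} \<inter> {\<omega> \<in> space M. \<forall>\<theta>\<in>Ts. \<forall>j\<in>J. (\<Theta> j \<omega> \<le> \<theta>) = c \<theta> j})"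
  proof (intro equalityI subsetI)
    fix \<omega> assume w: "\<omega> \<in> {\<omega> \<in> space M. \<Phi> (\<sigma> \<omega>) (\<lambda>\<theta> j. \<Theta> j \<omega> \<le> \<theta>)}"
    define c where "c = (\<lambda>\<theta> j. \<theta> \<in> Ts \<and> j \<in> J \<and> \<Theta> j \<omega> \<le> \<theta>)"
    have "\<Phi> (\<sigma> \<omega>) c = \<Phi> (\<sigma> \<omega>) (\<lambda>\<theta> j. \<Theta> j \<omega> \<le> \<theta>)" by (rule loc) (simp add: c_def)
    moreover have "c \<in> C" unfolding C_def c_def by auto
    ultimately show "\<omega> \<in> (\<Union>c\<in>C. {\<omega>\<in>space M. \<Phi> (\<sigma> \<omega>) c} \<inter> {\<omega> \<in> space M. \<forall>\<theta>\<in>Ts. \<forall>j\<in>J. (\<Theta> j \<omega> \<le> \<theta>) = c \<theta> j})"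
      using w by (intro UN_I[of c]) (auto simp: c_def)
  next
    fix \<omega> assume "\<omega> \<in> (\<Union>c\<in>C. {\<omega>\<in>space M. \<Phi> (\<sigma> \<omega>) c} \<inter> {\<omega> \<in> space M. \<forall>\<theta>\<in>Ts. \<forall>j\<in>J. (\<Theta> j \<omega> \<le> \<theta>) = c \<theta> j})"
    then obtain c where c: "\<Phi> (\<sigma> \<omega>) c" "\<omega> \<in> space M" "\<forall>\<theta>\<in>Ts. \<forall>j\<in>J. (\<Theta> j \<omega> \<le> \<theta>) = c \<theta> j"
      by blast
    have "\<Phi> (\<sigma> \<omega>) c = \<Phi> (\<sigma> \<omega>) (\<lambda>\<theta> j. \<Theta> j \<omega> \<le> \<theta>)" by (rule loc) (use c in auto)
    then show "\<omega> \<in> {\<omega> \<in> space M. \<Phi> (\<sigma> \<omega>) (\<lambda>\<theta> j. \<Theta> j \<omega> \<le> \<theta>)}" using c by auto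
  qed
  have m1: "{\<omega>\<in>space M. \<Phi> (\<sigma> \<omega>) c} \<in> sets M" for c
  proof -
    have "{\<omega>\<in>space M. \<Phi> (\<sigma> \<omega>) c} = \<sigma> -` {p. \<Phi> p c} \<inter> space M" by auto
    also have "\<dots> \<in> sets M" using \<sigma> by (rule measurable_sets) simp
    finally show ?thesis .
  qed
  have m2: "{\<omega> \<in> space M. \<forall>\<theta>\<in>Ts. \<forall>j\<in>J. (\<Theta> j \<omega> \<le> \<theta>) = c \<theta> j} \<in> sets M" for c
  proof (intro sets.sets_Collect_finite_All fin)
    fix \<theta> j assume "\<theta> \<in> Ts" "j \<in> J"
    have [measurable]: "\<Theta> j \<in> borel_measurable M" using \<Theta> \<open>j \<in> J\<close> .
    show "{\<omega> \<in> space M. (\<Theta> j \<omega> \<le> \<theta>) = c \<theta> j} \<in> sets M" by measurable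
  qed
  show ?thesis unfolding eq using finC m1 m2 by (intro sets.finite_UN) auto
qed

lemma final_ineq:
  fixes m r s t P2 P3 Q2 Q3 c :: real
  assumes m: "m \<ge> 2" and r: "r = 1 + m" and s: "s = 2 + m" and t: "t = 3 + m"
    and c: "c > 0" and P2: "P2 > 0" and P3: "P3 > 0"
    and Q2: "Q2 * (m / s) = (1 / 3) * P2"
    and Q3: "Q3 * (m / t) = (1 / 4) * P3"
  shows "c * (1/2 * P3 + 1/r * Q3) * (c * (2/3 * P2 + 2/s * Q2)) \<noteq>
         c * (2/3 * P3 + 2/s * Q3) * (c * (1/2 * P2 + 1/r * Q2))"
proof -
  have nz: "m \<noteq> 0" "r \<noteq> 0" "s \<noteq> 0" "t \<noteq> 0" using m r s t by auto
  have q2: "Q2 = P2 * s / (3 * m)" using Q2 nz by (simp add: field_simps)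
  have q3: "Q3 = P3 * t / (4 * m)" using Q3 nz by (simp add: field_simps)
  have "c * (1/2 * P3 + 1/r * Q3) * (c * (2/3 * P2 + 2/s * Q2)) -
         c * (2/3 * P3 + 2/s * Q3) * (c * (1/2 * P2 + 1/r * Q2))
       = c^2 * P2 * P3 * ((m-1)^2 / (36 * m * r * s))"
    unfolding q2 q3 using nz
    apply (simp add: field_simps)
    apply (simp add: r s t algebra_simps power2_eq_square)
    done
  moreover have "c^2 * P2 * P3 * ((m-1)^2 / (36 * m * r * s)) > 0"
    using m c P2 P3 r s by (intro mult_pos_pos divide_pos_pos) auto
  ultimately have "c * (1/2 * P3 + 1/r * Q3) * (c * (2/3 * P2 + 2/s * Q2)) -
         c * (2/3 * P3 + 2/s * Q3) * (c * (1/2 * P2 + 1/r * Q2)) > 0" by (simp only:)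
  then show ?thesis by linarith
qed

lemma Tcomb_abs:
  fixes x2 xn u w :: real and f :: "nat \<Rightarrow> real"
  assumes "\<not> (a \<and> b)" "u \<le> w"
  shows "(((a \<and> (x2 \<le> u \<and> (\<forall>k\<in>K3. u < f k))) \<or> (b \<and> (xn \<le> u \<and> (\<forall>k\<in>K2. u < f k)))) \<and>
          ((a \<and> (x2 \<le> w \<and> (\<forall>k\<in>K3. w < f k))) \<or> (b \<and> (xn \<le> w \<and> (\<forall>k\<in>K2. w < f k))))) \<longleftrightarrow>
         ((a \<and> (x2 \<le> u \<and> (\<forall>k\<in>K3. w < f k))) \<or> (b \<and> (xn \<le> u \<and> (\<forall>k\<in>K2. w < f k))))"
proof -
  have i1: "\<forall>k\<in>K. u < f k" if "\<forall>k\<in>K. w < f k" for K using that assms(2) by force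
  show ?thesis using assms(1) i1 assms(2) by auto
qed

lemma Tmid_abs:
  fixes x2 xn u v w :: real and f :: "nat \<Rightarrow> real"
  assumes "u \<le> v" "v \<le> w"
    and "(a \<and> (x2 \<le> u \<and> (\<forall>k\<in>K3. w < f k))) \<or> (b \<and> (xn \<le> u \<and> (\<forall>k\<in>K2. w < f k)))"
  shows "(a \<and> (x2 \<le> v \<and> (\<forall>k\<in>K3. v < f k))) \<or> (b \<and> (xn \<le> v \<and> (\<forall>k\<in>K2. v < f k)))"
proof -
  have i1: "\<forall>k\<in>K. v < f k" if "\<forall>k\<in>K. w < f k" for K using that assms(2) by force
  show ?thesis using assms i1 by auto
qed

lemma indep_prod:
  fixes \<Theta> :: "nat \<Rightarrow> 'a \<Rightarrow> real"
  assumes P: "prob_space M" and ind: "prob_space.indep_vars M (\<lambda>_. borel) \<Theta> I"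
    and J: "J \<subseteq> I" "J \<noteq> {}" "finite J" and A: "\<And>j. j \<in> J \<Longrightarrow> A j \<in> sets borel"
  shows "measure M {\<omega>\<in>space M. \<forall>j\<in>J. \<Theta> j \<omega> \<in> A j} = (\<Prod>j\<in>J. measure M {\<omega>\<in>space M. \<Theta> j \<omega> \<in> A j})"
proof -
  interpret prob_space M by fact
  have ivs: "indep_sets (\<lambda>i. {\<Theta> i -` B \<inter> space M | B. B \<in> sets borel}) I"
    using ind unfolding indep_vars_def2 by auto
  have "prob (\<Inter>j\<in>J. \<Theta> j -` A j \<inter> space M) = (\<Prod>j\<in>J. prob (\<Theta> j -` A j \<inter> space M))"
    by (rule indep_setsD[OF ivs J]) (use A in auto)
  moreover have "(\<Inter>j\<in>J. \<Theta> j -` A j \<inter> space M) = {\<omega>\<in>space M. \<forall>j\<in>J. \<Theta> j \<omega> \<in> A j}"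
    using J(2) by auto
  moreover have "\<And>j. \<Theta> j -` A j \<inter> space M = {\<omega>\<in>space M. \<Theta> j \<omega> \<in> A j}" by auto
  ultimately show ?thesis by simp
qed

lemma Pi_event_meas:
  fixes \<sigma> :: "'a \<Rightarrow> nat \<Rightarrow> nat" and \<Theta> :: "nat \<Rightarrow> 'a \<Rightarrow> real"
  assumes \<sigma>: "\<sigma> \<in> measurable M (count_space UNIV)"
    and \<Theta>: "\<And>j. j \<in> {1..n} \<Longrightarrow> \<Theta> j \<in> borel_measurable M"
    and fin: "finite Ts"
    and loc: "\<And>f f'. (\<And>\<theta>. \<theta> \<in> Ts \<Longrightarrow> f \<theta> = f' \<theta>) \<Longrightarrow> \<Psi> f = \<Psi> f'"
  shows "{\<omega>\<in>space M. \<Psi> (\<lambda>\<theta>. Pi_proc n \<Theta> \<sigma> \<theta> \<omega>)} \<in> sets M"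
proof -
  have "{\<omega> \<in> space M. (\<lambda>p b. \<Psi> (\<lambda>\<theta>. label_partition p (comp_boxes n (b \<theta>)))) (\<sigma> \<omega>) (\<lambda>\<theta> j. \<Theta> j \<omega> \<le> \<theta>)} \<in> sets M"
  proof (rule meas_finite_dep[OF \<sigma> \<Theta> fin])
    fix p and b b' :: "real \<Rightarrow> nat \<Rightarrow> bool"
    assume "\<And>\<theta> j. \<theta> \<in> Ts \<Longrightarrow> j \<in> {1..n} \<Longrightarrow> b \<theta> j = b' \<theta> j"
    then have "\<And>\<theta>. \<theta> \<in> Ts \<Longrightarrow> comp_boxes n (b \<theta>) = comp_boxes n (b' \<theta>)"
      by (intro comp_boxes_cong) auto
    then show "\<Psi> (\<lambda>\<theta>. label_partition p (comp_boxes n (b \<theta>))) = \<Psi> (\<lambda>\<theta>. label_partition p (comp_boxes n (b' \<theta>)))"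
      by (intro loc) auto
  qed auto
  then show ?thesis unfolding Pi_proc_def by simp
qed

lemma all_le_1: "(\<forall>i\<le>(1::nat). Q i) \<longleftrightarrow> Q 0 \<and> Q 1"
  by (metis One_nat_def le_Suc_eq le_zero_eq order_refl zero_le)

theorem mainTheorem2:
  fixes M :: "'a measure" and \<Theta> :: "nat \<Rightarrow> 'a \<Rightarrow> real"
    and \<sigma> :: "'a \<Rightarrow> nat \<Rightarrow> nat" and n :: nat
  assumes "prob_space M"
    and "prob_space.indep_vars M (\<lambda>_. borel) \<Theta> {1..}"
    and "\<And>j \<theta>. j \<ge> 1 \<Longrightarrow> \<theta> \<ge> 0 \<Longrightarrow>
           measure M {\<omega> \<in> space M. \<Theta> j \<omega> \<le> \<theta>} = theta_cdf j \<theta>"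
    and "\<sigma> \<in> measurable M (count_space UNIV)"
    and "distr M (count_space UNIV) \<sigma> = measure_pmf (pmf_of_set {p. p permutes {1..n}})"
    and "\<And>(A :: (nat \<Rightarrow> nat) set) B. B \<in> sets (PiM {1..} (\<lambda>_. (borel :: real measure))) \<Longrightarrow>
           measure M {\<omega> \<in> space M. \<sigma> \<omega> \<in> A \<and> (\<lambda>j\<in>{1..}. \<Theta> j \<omega>) \<in> B}
         = measure M {\<omega> \<in> space M. \<sigma> \<omega> \<in> A}
           * measure M {\<omega> \<in> space M. (\<lambda>j\<in>{1..}. \<Theta> j \<omega>) \<in> B}"
    and "n > 2"
  shows "\<not> markov_discrete M {0..} (Pi_proc n \<Theta> \<sigma>)"
proof
  assume mk: "markov_discrete M {0..} (Pi_proc n \<Theta> \<sigma>)"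
  interpret P: prob_space M by fact
  define X where "X = Pi_proc n \<Theta> \<sigma>"
  define x1 where "x1 = {{1::nat},{2..n}}"
  define Perms where "Perms = {p. p permutes {1..n}}"
  have n3: "n \<ge> 3" using assms(7) by simp
  have \<Theta>m: "\<And>j. j \<ge> 1 \<Longrightarrow> \<Theta> j \<in> borel_measurable M"
    using assms(2) unfolding P.indep_vars_def2 by auto
  have \<sigma>m: "\<sigma> \<in> measurable M (count_space UNIV)" by fact
  have finP: "finite Perms" unfolding Perms_def by (rule finite_permutations) simp
  have neP: "Perms \<noteq> {}" unfolding Perms_def using permutes_id by blast
  have \<sigma>set: "{\<omega>\<in>space M. \<sigma> \<omega> \<in> A} \<in> sets M" for A
  proof -
    have "{\<omega>\<in>space M. \<sigma> \<omega> \<in> A} = \<sigma> -` A \<inter> space M" by auto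
    also have "\<dots> \<in> sets M" using \<sigma>m by (rule measurable_sets) simp
    finally show ?thesis .
  qed
  have \<sigma>prob: "measure M {\<omega>\<in>space M. \<sigma> \<omega> \<in> A} = real (card (Perms \<inter> A)) / real (card Perms)" for A
  proof -
    have "measure M {\<omega>\<in>space M. \<sigma> \<omega> \<in> A} = measure M (\<sigma> -` A \<inter> space M)"
      by (intro arg_cong[where f="measure M"]) auto
    also have "\<dots> = measure (distr M (count_space UNIV) \<sigma>) A"
      by (rule measure_distr[symmetric]) (use \<sigma>m in auto)
    also have "\<dots> = measure (measure_pmf (pmf_of_set Perms)) A"
      using assms(5) unfolding Perms_def by simp
    also have "\<dots> = real (card (Perms \<inter> A)) / real (card Perms)"
      by (rule measure_pmf_of_set[OF neP finP])
    finally show ?thesis .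
  qed
  have AE: "AE \<omega> in M. \<sigma> \<omega> \<in> Perms"
  proof -
    have "measure M {\<omega>\<in>space M. \<sigma> \<omega> \<in> Perms} = 1"
      using \<sigma>prob[of Perms] finP neP by simp
    then have "AE \<omega> in M. \<omega> \<in> {\<omega>\<in>space M. \<sigma> \<omega> \<in> Perms}"
      using P.AE_in_set_eq_1[OF \<sigma>set] by simp
    then show ?thesis by (rule AE_mp) (auto intro!: AE_I2)
  qed
  define c where "c = measure M {\<omega>\<in>space M. \<sigma> \<omega> \<in> {p. p 1 = 1}}"
  have c_eq: "measure M {\<omega>\<in>space M. \<sigma> \<omega> \<in> {p. p n = 1}} = c"
  proof -
    let ?\<tau> = "Transposition.transpose (1::nat) n"
    have \<tau>: "?\<tau> permutes {1..n}" using n3 by (intro permutes_swap_id) auto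
    have "bij_betw (\<lambda>p. p \<circ> ?\<tau>) (Perms \<inter> {p. p 1 = 1}) (Perms \<inter> {p. p n = 1})"
    proof (rule bij_betw_byWitness[where f'="\<lambda>p. p \<circ> ?\<tau>"])
      show "\<forall>a\<in>Perms \<inter> {p. p 1 = 1}. a \<circ> ?\<tau> \<circ> ?\<tau> = a" by (simp add: comp_assoc)
      show "\<forall>a\<in>Perms \<inter> {p. p n = 1}. a \<circ> ?\<tau> \<circ> ?\<tau> = a" by (simp add: comp_assoc)
      show "(\<lambda>p. p \<circ> ?\<tau>) ` (Perms \<inter> {p. p 1 = 1}) \<subseteq> Perms \<inter> {p. p n = 1}"
        using \<tau> unfolding Perms_def by (auto intro: permutes_compose)
      show "(\<lambda>p. p \<circ> ?\<tau>) ` (Perms \<inter> {p. p n = 1}) \<subseteq> Perms \<inter> {p. p 1 = 1}"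
        using \<tau> unfolding Perms_def by (auto intro: permutes_compose)
    qed
    then have "card (Perms \<inter> {p. p 1 = 1}) = card (Perms \<inter> {p. p n = 1})"
      by (rule bij_betw_same_card)
    then show ?thesis unfolding c_def \<sigma>prob by simp
  qed
  have c_pos: "c > 0"
  proof -
    have "id \<in> Perms \<inter> {p. p 1 = 1}" unfolding Perms_def by (simp add: permutes_id)
    then have "card (Perms \<inter> {p. p 1 = 1}) > 0" using finP by (auto simp: card_gt_0_iff)
    moreover have "card Perms > 0" using finP neP by (auto simp: card_gt_0_iff)
    ultimately show ?thesis unfolding c_def \<sigma>prob by simp
  qed
  have cdf: "measure M {\<omega>\<in>space M. \<Theta> j \<omega> \<le> u} = theta_cdf j u" if "j \<ge> 1" "u \<ge> 0" for j u
    using assms(3) that by simp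
  have ccdf: "measure M {\<omega>\<in>space M. u < \<Theta> j \<omega>} = 1 - theta_cdf j u" if "j \<ge> 1" "u \<ge> 0" for j u
  proof -
    have ev: "{\<omega>\<in>space M. \<Theta> j \<omega> \<le> u} \<in> sets M" using \<Theta>m[OF that(1)] by measurable
    have "{\<omega>\<in>space M. u < \<Theta> j \<omega>} = space M - {\<omega>\<in>space M. \<Theta> j \<omega> \<le> u}" by auto
    then show ?thesis using P.prob_compl[OF ev] cdf[OF that] by simp
  qed
  have indep: "measure M {\<omega>\<in>space M. \<forall>j\<in>J. \<Theta> j \<omega> \<in> A j} = (\<Prod>j\<in>J. measure M {\<omega>\<in>space M. \<Theta> j \<omega> \<in> A j})"
    if "J \<subseteq> {1..}" "J \<noteq> {}" "finite J" "\<And>j. j \<in> J \<Longrightarrow> A j \<in> sets borel" for J A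
    by (rule indep_prod[OF assms(1) assms(2) that])
  define Pi3 where "Pi3 w = (\<Prod>k\<in>{3..n}. 1 - theta_cdf k w)" for w
  define Pi2 where "Pi2 w = (\<Prod>k\<in>{2..n-1}. 1 - theta_cdf k w)" for w
  have probA: "measure M {\<omega>\<in>space M. \<Theta> 2 \<omega> \<le> u \<and> (\<forall>k\<in>{3..n}. w < \<Theta> k \<omega>)} = theta_cdf 2 u * Pi3 w"
    if "u \<ge> 0" "w \<ge> 0" for u w
  proof -
    define A where "A j = (if j = 2 then {..u} else {w<..})" for j :: nat
    have "measure M {\<omega>\<in>space M. \<Theta> 2 \<omega> \<le> u \<and> (\<forall>k\<in>{3..n}. w < \<Theta> k \<omega>)} = measure M {\<omega>\<in>space M. \<forall>j\<in>{2..n}. \<Theta> j \<omega> \<in> A j}"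
      using n3 unfolding A_def by (intro arg_cong[where f="measure M"]) (auto simp: Ball_def)
    also have "\<dots> = (\<Prod>j\<in>{2..n}. measure M {\<omega>\<in>space M. \<Theta> j \<omega> \<in> A j})"
      using n3 by (intro indep) (auto simp: A_def)
    also have "{2..n} = insert 2 {3..n}" using n3 by auto
    also have "(\<Prod>j\<in>insert 2 {3..n}. measure M {\<omega>\<in>space M. \<Theta> j \<omega> \<in> A j}) =
        measure M {\<omega>\<in>space M. \<Theta> 2 \<omega> \<in> A 2} * (\<Prod>j\<in>{3..n}. measure M {\<omega>\<in>space M. \<Theta> j \<omega> \<in> A j})"
      by (rule prod.insert) auto
    also have "measure M {\<omega>\<in>space M. \<Theta> 2 \<omega> \<in> A 2} = theta_cdf 2 u"
      using cdf[of 2 u] that by (simp add: A_def)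
    also have "(\<Prod>j\<in>{3..n}. measure M {\<omega>\<in>space M. \<Theta> j \<omega> \<in> A j}) = Pi3 w"
      unfolding Pi3_def using that by (intro prod.cong refl) (auto simp: A_def ccdf)
    finally show ?thesis .
  qed
  have probB: "measure M {\<omega>\<in>space M. \<Theta> n \<omega> \<le> u \<and> (\<forall>k\<in>{2..n-1}. w < \<Theta> k \<omega>)} = theta_cdf n u * Pi2 w"
    if "u \<ge> 0" "w \<ge> 0" for u w
  proof -
    define A where "A j = (if j = n then {..u} else {w<..})" for j :: nat
    have "measure M {\<omega>\<in>space M. \<Theta> n \<omega> \<le> u \<and> (\<forall>k\<in>{2..n-1}. w < \<Theta> k \<omega>)} = measure M {\<omega>\<in>space M. \<forall>j\<in>{2..n}. \<Theta> j \<omega> \<in> A j}"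
    proof -
      have "\<And>j. j \<in> {2..n} \<longleftrightarrow> j = n \<or> j \<in> {2..n-1}" using n3 by auto
      then show ?thesis using n3 unfolding A_def by (intro arg_cong[where f="measure M"]) auto
    qed
    also have "\<dots> = (\<Prod>j\<in>{2..n}. measure M {\<omega>\<in>space M. \<Theta> j \<omega> \<in> A j})"
      using n3 by (intro indep) (auto simp: A_def)
    also have "{2..n} = insert n {2..n-1}" using n3 by auto
    also have "(\<Prod>j\<in>insert n {2..n-1}. measure M {\<omega>\<in>space M. \<Theta> j \<omega> \<in> A j}) =
        measure M {\<omega>\<in>space M. \<Theta> n \<omega> \<in> A n} * (\<Prod>j\<in>{2..n-1}. measure M {\<omega>\<in>space M. \<Theta> j \<omega> \<in> A j})"
      by (rule prod.insert) auto
    also have "measure M {\<omega>\<in>space M. \<Theta> n \<omega> \<in> A n} = theta_cdf n u"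
      using cdf[of n u] that n3 by (simp add: A_def)
    also have "(\<Prod>j\<in>{2..n-1}. measure M {\<omega>\<in>space M. \<Theta> j \<omega> \<in> A j}) = Pi2 w"
      unfolding Pi2_def using that by (intro prod.cong refl) (auto simp: A_def ccdf)
    finally show ?thesis .
  qed

  have le_m: "{\<omega>\<in>space M. \<Theta> j \<omega> \<le> u} \<in> sets M" if "j \<ge> 1" for j u
    using \<Theta>m[OF that] by measurable
  have gt_m: "{\<omega>\<in>space M. u < \<Theta> j \<omega>} \<in> sets M" if "j \<ge> 1" for j u
    using \<Theta>m[OF that] by measurable
  have thA_m: "{\<omega>\<in>space M. \<Theta> 2 \<omega> \<le> u \<and> (\<forall>k\<in>{3..n}. w < \<Theta> k \<omega>)} \<in> sets M" for u w
    by (intro sets.sets_Collect_conj sets.sets_Collect_finite_All le_m gt_m) auto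
  have thB_m: "{\<omega>\<in>space M. \<Theta> n \<omega> \<le> u \<and> (\<forall>k\<in>{2..n-1}. w < \<Theta> k \<omega>)} \<in> sets M" for u w
    using n3 by (intro sets.sets_Collect_conj sets.sets_Collect_finite_All le_m gt_m) auto
  have comp: "(\<lambda>f. f k) \<in> borel_measurable (PiM {1..} (\<lambda>_. borel :: real measure))" if "k \<ge> 1" for k
    by (rule measurable_component_singleton) (use that in simp)
  have pi_le_m: "{f\<in>space (PiM {1..} (\<lambda>_. borel :: real measure)). f j \<le> u} \<in> sets (PiM {1..} (\<lambda>_. borel :: real measure))"
    if "j \<ge> 1" for j u
    using comp[OF that] by measurable
  have pi_gt_m: "{f\<in>space (PiM {1..} (\<lambda>_. borel :: real measure)). u < f j} \<in> sets (PiM {1..} (\<lambda>_. borel :: real measure))"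
    if "j \<ge> 1" for j u
    using comp[OF that] by measurable
  have probA\<sigma>: "measure M {\<omega>\<in>space M. \<sigma> \<omega> 1 = 1 \<and> (\<Theta> 2 \<omega> \<le> u \<and> (\<forall>k\<in>{3..n}. w < \<Theta> k \<omega>))} = c * (theta_cdf 2 u * Pi3 w)"
    if "u \<ge> 0" "w \<ge> 0" for u w
  proof -
    define BA where "BA = {f\<in>space (PiM {1..} (\<lambda>_. borel :: real measure)). f 2 \<le> u \<and> (\<forall>k\<in>{3..n}. w < f k)}"
    have BAm: "BA \<in> sets (PiM {1..} (\<lambda>_. borel :: real measure))"
      unfolding BA_def by (intro sets.sets_Collect_conj sets.sets_Collect_finite_All pi_le_m pi_gt_m) auto
    have e1: "{\<omega>\<in>space M. \<sigma> \<omega> 1 = 1 \<and> (\<Theta> 2 \<omega> \<le> u \<and> (\<forall>k\<in>{3..n}. w < \<Theta> k \<omega>))} =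
        {\<omega>\<in>space M. \<sigma> \<omega> \<in> {p. p 1 = 1} \<and> (\<lambda>j\<in>{1..}. \<Theta> j \<omega>) \<in> BA}"
      by (auto simp: BA_def space_PiM)
    have e2: "{\<omega>\<in>space M. (\<lambda>j\<in>{1..}. \<Theta> j \<omega>) \<in> BA} = {\<omega>\<in>space M. \<Theta> 2 \<omega> \<le> u \<and> (\<forall>k\<in>{3..n}. w < \<Theta> k \<omega>)}"
      by (auto simp: BA_def space_PiM)
    show ?thesis unfolding e1 assms(6)[OF BAm] e2 probA[OF that] c_def ..
  qed
  have probB\<sigma>: "measure M {\<omega>\<in>space M. \<sigma> \<omega> n = 1 \<and> (\<Theta> n \<omega> \<le> u \<and> (\<forall>k\<in>{2..n-1}. w < \<Theta> k \<omega>))} = c * (theta_cdf n u * Pi2 w)"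
    if "u \<ge> 0" "w \<ge> 0" for u w
  proof -
    define BA where "BA = {f\<in>space (PiM {1..} (\<lambda>_. borel :: real measure)). f n \<le> u \<and> (\<forall>k\<in>{2..n-1}. w < f k)}"
    have BAm: "BA \<in> sets (PiM {1..} (\<lambda>_. borel :: real measure))"
      unfolding BA_def using n3 by (intro sets.sets_Collect_conj sets.sets_Collect_finite_All pi_le_m pi_gt_m) auto
    have e1: "{\<omega>\<in>space M. \<sigma> \<omega> n = 1 \<and> (\<Theta> n \<omega> \<le> u \<and> (\<forall>k\<in>{2..n-1}. w < \<Theta> k \<omega>))} =
        {\<omega>\<in>space M. \<sigma> \<omega> \<in> {p. p n = 1} \<and> (\<lambda>j\<in>{1..}. \<Theta> j \<omega>) \<in> BA}"
      using n3 by (auto simp: BA_def space_PiM)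
    have e2: "{\<omega>\<in>space M. (\<lambda>j\<in>{1..}. \<Theta> j \<omega>) \<in> BA} = {\<omega>\<in>space M. \<Theta> n \<omega> \<le> u \<and> (\<forall>k\<in>{2..n-1}. w < \<Theta> k \<omega>)}"
      using n3 by (auto simp: BA_def space_PiM)
    show ?thesis unfolding e1 assms(6)[OF BAm] e2 probB[OF that] c_eq ..
  qed
  define T where "T u w \<omega> \<longleftrightarrow> (\<sigma> \<omega> 1 = 1 \<and> (\<Theta> 2 \<omega> \<le> u \<and> (\<forall>k\<in>{3..n}. w < \<Theta> k \<omega>))) \<or>
       (\<sigma> \<omega> n = 1 \<and> (\<Theta> n \<omega> \<le> u \<and> (\<forall>k\<in>{2..n-1}. w < \<Theta> k \<omega>)))" for u w \<omega>
  have \<sigma>set1: "{\<omega>\<in>space M. \<sigma> \<omega> 1 = 1} \<in> sets M" using \<sigma>set[of "{p. p 1 = 1}"] by simp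
  have \<sigma>setn: "{\<omega>\<in>space M. \<sigma> \<omega> n = 1} \<in> sets M" using \<sigma>set[of "{p. p n = 1}"] by simp
  have TE_m: "{\<omega>\<in>space M. T u w \<omega>} \<in> sets M" for u w
  proof -
    have eq: "{\<omega>\<in>space M. T u w \<omega>} = ({\<omega>\<in>space M. \<sigma> \<omega> 1 = 1} \<inter> {\<omega>\<in>space M. \<Theta> 2 \<omega> \<le> u \<and> (\<forall>k\<in>{3..n}. w < \<Theta> k \<omega>)}) \<union>
       ({\<omega>\<in>space M. \<sigma> \<omega> n = 1} \<inter> {\<omega>\<in>space M. \<Theta> n \<omega> \<le> u \<and> (\<forall>k\<in>{2..n-1}. w < \<Theta> k \<omega>)})"
      unfolding T_def by auto
    show ?thesis unfolding eq by (intro sets.Un sets.Int \<sigma>set1 \<sigma>setn thA_m thB_m)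
  qed
  have probT: "measure M {\<omega>\<in>space M. T u w \<omega>} = c * (theta_cdf 2 u * Pi3 w + theta_cdf n u * Pi2 w)"
    if "0 \<le> u" "u \<le> w" for u w
  proof -
    define EA where "EA = {\<omega>\<in>space M. \<sigma> \<omega> 1 = 1 \<and> (\<Theta> 2 \<omega> \<le> u \<and> (\<forall>k\<in>{3..n}. w < \<Theta> k \<omega>))}"
    define EB where "EB = {\<omega>\<in>space M. \<sigma> \<omega> n = 1 \<and> (\<Theta> n \<omega> \<le> u \<and> (\<forall>k\<in>{2..n-1}. w < \<Theta> k \<omega>))}"
    have w0: "0 \<le> w" using that by linarith
    have eqU: "{\<omega>\<in>space M. T u w \<omega>} = EA \<union> EB"
      unfolding T_def EA_def EB_def by blast
    have eA: "EA = {\<omega>\<in>space M. \<sigma> \<omega> 1 = 1} \<inter> {\<omega>\<in>space M. \<Theta> 2 \<omega> \<le> u \<and> (\<forall>k\<in>{3..n}. w < \<Theta> k \<omega>)}"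
      unfolding EA_def by blast
    have mA: "EA \<in> sets M" unfolding eA by (rule sets.Int[OF \<sigma>set1 thA_m])
    have eB: "EB = {\<omega>\<in>space M. \<sigma> \<omega> n = 1} \<inter> {\<omega>\<in>space M. \<Theta> n \<omega> \<le> u \<and> (\<forall>k\<in>{2..n-1}. w < \<Theta> k \<omega>)}"
      unfolding EB_def by blast
    have mB: "EB \<in> sets M" unfolding eB by (rule sets.Int[OF \<sigma>setn thB_m])
    have nin: "n \<in> {3..n}" using n3 by auto
    have disj: "EA \<inter> EB = {}"
    proof (rule equals0I)
      fix \<omega> assume a: "\<omega> \<in> EA \<inter> EB"
      then have "\<forall>k\<in>{3..n}. w < \<Theta> k \<omega>" "\<Theta> n \<omega> \<le> u" unfolding EA_def EB_def by auto
      then have "w < \<Theta> n \<omega>" "\<Theta> n \<omega> \<le> u" using nin by auto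
      then show False using that by linarith
    qed
    have "measure M (EA \<union> EB) = measure M EA + measure M EB"
      by (rule P.finite_measure_Union[OF mA mB disj])
    also have "measure M EA = c * (theta_cdf 2 u * Pi3 w)" unfolding EA_def by (rule probA\<sigma>[OF that(1) w0])
    also have "measure M EB = c * (theta_cdf n u * Pi2 w)" unfolding EB_def by (rule probB\<sigma>[OF that(1) w0])
    finally show ?thesis unfolding eqU by (simp only: distrib_left)
  qed
  have Xchar: "Pi_proc n \<Theta> \<sigma> \<theta> \<omega> = x1 \<longleftrightarrow> T \<theta> \<theta> \<omega>" if "\<sigma> \<omega> \<in> Perms" for \<theta> \<omega>
  proof -
    have "\<sigma> \<omega> permutes {1..n}" using that unfolding Perms_def by simp
    then have "Pi_proc n \<Theta> \<sigma> \<theta> \<omega> = x1 \<longleftrightarrow> (\<sigma> \<omega> 1 = 1 \<and> (\<Theta> 2 \<omega> \<le> \<theta>) \<and> (\<forall>k\<in>{3..n}. \<not> \<Theta> k \<omega> \<le> \<theta>)) \<or>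
         (\<sigma> \<omega> n = 1 \<and> (\<Theta> n \<omega> \<le> \<theta>) \<and> (\<forall>k\<in>{2..n-1}. \<not> \<Theta> k \<omega> \<le> \<theta>))"
      unfolding Pi_proc_def x1_def by (rule lp_char[OF n3])
    then show ?thesis unfolding T_def not_le .
  qed
  have excl: "\<sigma> \<omega> 1 = 1 \<Longrightarrow> \<sigma> \<omega> n = 1 \<Longrightarrow> False" if "\<sigma> \<omega> \<in> Perms" for \<omega>
  proof -
    have inj: "inj_on (\<sigma> \<omega>) {1..n}" by (rule permutes_inj_on) (use that in \<open>simp add: Perms_def\<close>)
    assume a: "\<sigma> \<omega> 1 = 1" and b: "\<sigma> \<omega> n = 1"
    then have "\<sigma> \<omega> 1 = \<sigma> \<omega> n" by simp
    from inj_onD[OF inj this] n3 have "1 = n" by auto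
    then show False using n3 by simp
  qed
  have Tcomb: "(T u u \<omega> \<and> T w w \<omega>) \<longleftrightarrow> T u w \<omega>" if "\<sigma> \<omega> \<in> Perms" "u \<le> w" for u w \<omega>
    unfolding T_def
    by (rule Tcomb_abs[where a="\<sigma> \<omega> 1 = 1" and b="\<sigma> \<omega> n = 1" and f="\<lambda>k. \<Theta> k \<omega>"])
       (use excl[OF that(1)] that(2) in auto)
  have Tmid: "T u w \<omega> \<Longrightarrow> T v v \<omega>" if "u \<le> v" "v \<le> w" for u v w \<omega>
    unfolding T_def
    by (rule Tmid_abs[where a="\<sigma> \<omega> 1 = 1" and b="\<sigma> \<omega> n = 1" and f="\<lambda>k. \<Theta> k \<omega>" and u=u and w=w])
       (use that in auto)

  note mk' = mk[unfolded markov_discrete_def, rule_format, where k=1 and s="\<lambda>i. real i + 1" and x="\<lambda>_. x1" and t=3 and y=x1]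
  have eqn: "measure M {\<omega>\<in>space M. Pi_proc n \<Theta> \<sigma> 3 \<omega> = x1 \<and> (\<forall>i\<le>1. Pi_proc n \<Theta> \<sigma> (real i + 1) \<omega> = x1)}
      * measure M {\<omega>\<in>space M. Pi_proc n \<Theta> \<sigma> (real 1 + 1) \<omega> = x1}
    = measure M {\<omega>\<in>space M. Pi_proc n \<Theta> \<sigma> 3 \<omega> = x1 \<and> Pi_proc n \<Theta> \<sigma> (real 1 + 1) \<omega> = x1}
      * measure M {\<omega>\<in>space M. \<forall>i\<le>1. Pi_proc n \<Theta> \<sigma> (real i + 1) \<omega> = x1}"
    by (rule mk') auto
  have Ev_m: "{\<omega>\<in>space M. \<Psi> (\<lambda>\<theta>. Pi_proc n \<Theta> \<sigma> \<theta> \<omega>)} \<in> sets M"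
    if "\<And>f f'. (\<And>\<theta>. \<theta> \<in> {1,2,3} \<Longrightarrow> f \<theta> = f' \<theta>) \<Longrightarrow> \<Psi> f = \<Psi> f'" for \<Psi>
  proof (rule Pi_event_meas[OF \<sigma>m, where Ts="{1,2,3}"])
    show "\<And>j. j \<in> {1..n} \<Longrightarrow> \<Theta> j \<in> borel_measurable M" using \<Theta>m by auto
    show "finite {1,2,3::real}" by simp
    fix f f' :: "real \<Rightarrow> nat set set"
    assume "\<And>\<theta>. \<theta> \<in> {1,2,3} \<Longrightarrow> f \<theta> = f' \<theta>"
    then show "\<Psi> f = \<Psi> f'" by (rule that)
  qed
  have m1: "measure M {\<omega>\<in>space M. Pi_proc n \<Theta> \<sigma> 3 \<omega> = x1 \<and> (\<forall>i\<le>1. Pi_proc n \<Theta> \<sigma> (real i + 1) \<omega> = x1)}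
      = measure M {\<omega>\<in>space M. T 1 3 \<omega>}"
  proof (rule measure_eq_AE)
    show "AE \<omega> in M. (\<omega> \<in> {\<omega>\<in>space M. Pi_proc n \<Theta> \<sigma> 3 \<omega> = x1 \<and> (\<forall>i\<le>1. Pi_proc n \<Theta> \<sigma> (real i + 1) \<omega> = x1)})
       = (\<omega> \<in> {\<omega>\<in>space M. T 1 3 \<omega>})"
      using AE
    proof eventually_elim
      case (elim \<omega>)
      have "(Pi_proc n \<Theta> \<sigma> 3 \<omega> = x1 \<and> (\<forall>i\<le>1. Pi_proc n \<Theta> \<sigma> (real i + 1) \<omega> = x1)) \<longleftrightarrow>
            (T 3 3 \<omega> \<and> T 1 1 \<omega> \<and> T 2 2 \<omega>)"
        unfolding all_le_1 using Xchar[OF elim] by simp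
      also have "\<dots> \<longleftrightarrow> T 1 3 \<omega>"
        using Tcomb[OF elim, of 1 3] Tmid[of 1 2 3 \<omega>] by auto
      finally show ?case by blast
    qed
    show "{\<omega>\<in>space M. Pi_proc n \<Theta> \<sigma> 3 \<omega> = x1 \<and> (\<forall>i\<le>1. Pi_proc n \<Theta> \<sigma> (real i + 1) \<omega> = x1)} \<in> sets M"
    proof -
      define \<Psi> where "\<Psi> = (\<lambda>f :: real \<Rightarrow> nat set set. f 3 = x1 \<and> (\<forall>i\<le>(1::nat). f (real i + 1) = x1))"
      have loc: "\<Psi> f = \<Psi> f'"
        if h: "\<And>\<theta>. \<theta> \<in> {1,2,3} \<Longrightarrow> f \<theta> = f' \<theta>" for f f' :: "real \<Rightarrow> nat set set"
      proof -
        have "f 3 = f' 3" "f 1 = f' 1" "f 2 = f' 2" using h by auto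
        then show ?thesis unfolding \<Psi>_def unfolding all_le_1 by simp
      qed
      have E: "{\<omega>\<in>space M. \<Psi> (\<lambda>\<theta>. Pi_proc n \<Theta> \<sigma> \<theta> \<omega>)} \<in> sets M" by (rule Ev_m) (erule loc)
      then show ?thesis unfolding \<Psi>_def by simp
    qed
  qed (rule TE_m)
  have m2: "measure M {\<omega>\<in>space M. Pi_proc n \<Theta> \<sigma> (real 1 + 1) \<omega> = x1} = measure M {\<omega>\<in>space M. T 2 2 \<omega>}"
  proof (rule measure_eq_AE)
    show "AE \<omega> in M. (\<omega> \<in> {\<omega>\<in>space M. Pi_proc n \<Theta> \<sigma> (real 1 + 1) \<omega> = x1}) = (\<omega> \<in> {\<omega>\<in>space M. T 2 2 \<omega>})"
      using AE
    proof eventually_elim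
      case (elim \<omega>)
      show ?case using Xchar[OF elim, of 2] by simp
    qed
    show "{\<omega>\<in>space M. Pi_proc n \<Theta> \<sigma> (real 1 + 1) \<omega> = x1} \<in> sets M"
    proof -
      define \<Psi> where "\<Psi> = (\<lambda>f :: real \<Rightarrow> nat set set. f 2 = x1)"
      have loc: "\<Psi> f = \<Psi> f'"
        if h: "\<And>\<theta>. \<theta> \<in> {1,2,3} \<Longrightarrow> f \<theta> = f' \<theta>" for f f' :: "real \<Rightarrow> nat set set"
      proof -
        have "f 3 = f' 3" "f 1 = f' 1" "f 2 = f' 2" using h by auto
        then show ?thesis unfolding \<Psi>_def by simp
      qed
      have E: "{\<omega>\<in>space M. \<Psi> (\<lambda>\<theta>. Pi_proc n \<Theta> \<sigma> \<theta> \<omega>)} \<in> sets M" by (rule Ev_m) (erule loc)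
      then show ?thesis unfolding \<Psi>_def by simp
    qed
  qed (rule TE_m)
  have m3: "measure M {\<omega>\<in>space M. Pi_proc n \<Theta> \<sigma> 3 \<omega> = x1 \<and> Pi_proc n \<Theta> \<sigma> (real 1 + 1) \<omega> = x1}
      = measure M {\<omega>\<in>space M. T 2 3 \<omega>}"
  proof (rule measure_eq_AE)
    show "AE \<omega> in M. (\<omega> \<in> {\<omega>\<in>space M. Pi_proc n \<Theta> \<sigma> 3 \<omega> = x1 \<and> Pi_proc n \<Theta> \<sigma> (real 1 + 1) \<omega> = x1})
       = (\<omega> \<in> {\<omega>\<in>space M. T 2 3 \<omega>})"
      using AE
    proof eventually_elim
      case (elim \<omega>)
      show ?case using Xchar[OF elim, of 2] Xchar[OF elim, of 3] Tcomb[OF elim, of 2 3] by auto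
    qed
    show "{\<omega>\<in>space M. Pi_proc n \<Theta> \<sigma> 3 \<omega> = x1 \<and> Pi_proc n \<Theta> \<sigma> (real 1 + 1) \<omega> = x1} \<in> sets M"
    proof -
      define \<Psi> where "\<Psi> = (\<lambda>f :: real \<Rightarrow> nat set set. f 3 = x1 \<and> f 2 = x1)"
      have loc: "\<Psi> f = \<Psi> f'"
        if h: "\<And>\<theta>. \<theta> \<in> {1,2,3} \<Longrightarrow> f \<theta> = f' \<theta>" for f f' :: "real \<Rightarrow> nat set set"
      proof -
        have "f 3 = f' 3" "f 1 = f' 1" "f 2 = f' 2" using h by auto
        then show ?thesis unfolding \<Psi>_def by simp
      qed
      have E: "{\<omega>\<in>space M. \<Psi> (\<lambda>\<theta>. Pi_proc n \<Theta> \<sigma> \<theta> \<omega>)} \<in> sets M" by (rule Ev_m) (erule loc)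
      then show ?thesis unfolding \<Psi>_def by simp
    qed
  qed (rule TE_m)
  have m4: "measure M {\<omega>\<in>space M. \<forall>i\<le>1. Pi_proc n \<Theta> \<sigma> (real i + 1) \<omega> = x1}
      = measure M {\<omega>\<in>space M. T 1 2 \<omega>}"
  proof (rule measure_eq_AE)
    show "AE \<omega> in M. (\<omega> \<in> {\<omega>\<in>space M. \<forall>i\<le>1. Pi_proc n \<Theta> \<sigma> (real i + 1) \<omega> = x1})
       = (\<omega> \<in> {\<omega>\<in>space M. T 1 2 \<omega>})"
      using AE
    proof eventually_elim
      case (elim \<omega>)
      have "(\<forall>i\<le>(1::nat). Pi_proc n \<Theta> \<sigma> (real i + 1) \<omega> = x1) \<longleftrightarrow> (T 1 1 \<omega> \<and> T 2 2 \<omega>)"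
        unfolding all_le_1 using Xchar[OF elim] by simp
      also have "\<dots> \<longleftrightarrow> T 1 2 \<omega>"
        using Tcomb[OF elim, of 1 2] by simp
      finally show ?case by blast
    qed
    show "{\<omega>\<in>space M. \<forall>i\<le>1. Pi_proc n \<Theta> \<sigma> (real i + 1) \<omega> = x1} \<in> sets M"
    proof -
      define \<Psi> where "\<Psi> = (\<lambda>f :: real \<Rightarrow> nat set set. \<forall>i\<le>(1::nat). f (real i + 1) = x1)"
      have loc: "\<Psi> f = \<Psi> f'"
        if h: "\<And>\<theta>. \<theta> \<in> {1,2,3} \<Longrightarrow> f \<theta> = f' \<theta>" for f f' :: "real \<Rightarrow> nat set set"
      proof -
        have "f 3 = f' 3" "f 1 = f' 1" "f 2 = f' 2" using h by auto
        then show ?thesis unfolding \<Psi>_def unfolding all_le_1 by simp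
      qed
      have E: "{\<omega>\<in>space M. \<Psi> (\<lambda>\<theta>. Pi_proc n \<Theta> \<sigma> \<theta> \<omega>)} \<in> sets M" by (rule Ev_m) (erule loc)
      then show ?thesis unfolding \<Psi>_def by (simp only:)
    qed
  qed (rule TE_m)
  define m where "m = real n - 1"
  define r where "r = 1 + m"
  define s where "s = 2 + m"
  define t where "t = 3 + m"
  have mge: "m \<ge> 2" using n3 unfolding m_def by simp
  have cdf_lt1: "theta_cdf k w < 1" if "k \<ge> 2" "w \<ge> 0" for k w
  proof -
    have d: "w + real k - 1 > 0" using that by simp
    then have "w / (w + real k - 1) < 1" using that by (simp add: divide_less_eq)
    then show ?thesis using d unfolding theta_cdf_def by simp
  qed
  have Pi3_pos: "Pi3 w > 0" if "w \<ge> 0" for w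
    unfolding Pi3_def using cdf_lt1 that by (intro prod_pos) auto
  have prodrel: "Pi2 w * (1 - theta_cdf n w) = (1 - theta_cdf 2 w) * Pi3 w" for w
  proof -
    have "Pi2 w * (1 - theta_cdf n w) = (\<Prod>k\<in>insert n {2..n-1}. 1 - theta_cdf k w)"
      unfolding Pi2_def using n3 by (subst prod.insert) auto
    also have "insert n {2..n-1} = insert 2 {3..n}" using n3 by auto
    also have "(\<Prod>k\<in>insert 2 {3..n}. 1 - theta_cdf k w) = (1 - theta_cdf 2 w) * Pi3 w"
      unfolding Pi3_def by (subst prod.insert) auto
    finally show ?thesis .
  qed
  have cdf21: "theta_cdf 2 1 = 1/2" by (simp add: theta_cdf_def)
  have cdf22: "theta_cdf 2 2 = 2/3" by (simp add: theta_cdf_def)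
  have cdf23: "theta_cdf 2 3 = 3/4" by (simp add: theta_cdf_def)
  have cdfn1: "theta_cdf n 1 = 1/r" unfolding theta_cdf_def r_def m_def using n3 by simp
  have cdfn2: "theta_cdf n 2 = 2/s" unfolding theta_cdf_def s_def m_def using n3 by simp
  have cdfn3: "theta_cdf n 3 = 3/t" unfolding theta_cdf_def t_def m_def using n3 by simp
  have Q2: "Pi2 2 * (m / s) = (1/3) * Pi3 2"
  proof -
    have "1 - theta_cdf n 2 = m / s" unfolding cdfn2 s_def using mge by (simp add: field_simps)
    then show ?thesis using prodrel[of 2] cdf22 by simp
  qed
  have Q3: "Pi2 3 * (m / t) = (1/4) * Pi3 3"
  proof -
    have "1 - theta_cdf n 3 = m / t" unfolding cdfn3 t_def using mge by (simp add: field_simps)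
    then show ?thesis using prodrel[of 3] cdf23 by simp
  qed
  have "c * (1/2 * Pi3 3 + 1/r * Pi2 3) * (c * (2/3 * Pi3 2 + 2/s * Pi2 2)) \<noteq>
         c * (2/3 * Pi3 3 + 2/s * Pi2 3) * (c * (1/2 * Pi3 2 + 1/r * Pi2 2))"
    by (rule final_ineq[OF mge r_def s_def t_def c_pos Pi3_pos Pi3_pos Q2 Q3]) auto
  moreover have "c * (1/2 * Pi3 3 + 1/r * Pi2 3) * (c * (2/3 * Pi3 2 + 2/s * Pi2 2)) =
         c * (2/3 * Pi3 3 + 2/s * Pi2 3) * (c * (1/2 * Pi3 2 + 1/r * Pi2 2))"
    using eqn unfolding m1 m2 m3 m4 probT[of 1 3, simplified] probT[of 2 2, simplified]
      probT[of 2 3, simplified] probT[of 1 2, simplified] cdf21 cdf22 cdfn1 cdfn2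
    by simp
  ultimately show False by blast
qed

end
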